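(* Let $S$ be a round two-sphere in $\mathbb{HP}^1$ and $Q^2_S=\mathbb{P}(\{[S],[Sj]\}^{\perp})\cap Q^4$, where $[S],[Sj]$ are homogeneous representatives of the points of $Q^4$ corresponding to the two conformal structures on $S$. Then the real structure $j$ of $Q^4$ restricts to a real structure $\{j,Q^2_S\}$, and the two-sphere $S$, as a subset of $S^4\subset Q^4$, is exactly the real set of $\{j,Q^2_S\}$, namely the points $[a\wedge aj]$ with $[a]$ on the twistor lift $S\subset\mathbb{CP}^3$.
   Context: $\mathbb{H}^2$ (right $\mathbb{H}$-vector space) is identified with $\mathbb{C}^4$ by restricting scalars to $\mathbb{C}=\mathrm{span}_{\mathbb{R}}\{1,i\}$; right multiplication by $j$ is $\mathbb{C}$-antilinear. $\mathbb{CP}^3=\mathbb{P}(\mathbb{C}^4)$, $\mathbb{HP}^1=\{v\mathbb{H}\}\cong S^4$. $Q^4=\{[\alpha]\in\mathbb{P}(\Lambda^2\mathbb{C}^4):\alpha\wedge\alpha=0\}$, $[v\wedge w]$ corresponding to the projective line through $[v],[w]$; $\perp$ is with respect to $(\alpha,\beta)\mapsto\alpha\wedge\beta\in\Lambda^4\mathbb{C}^4\cong\mathbb{C}$. The antilinear extension of $v\wedge w\mapsto vj\wedge wj$ induces a real structure (antiholomorphic involution) $j$ of $Q^4$ whose fixed points are the twistor fibres $[v\wedge vj]$; $v\mathbb{H}\mapsto[v\wedge vj]$ identifies $S^4$ with this real set. A round two-sphere with conformal structure is $\{l:Tl=l\}$ for some $T\in\mathrm{End}_{\mathbb{H}}(\mathbb{H}^2)$,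 $T^2=-1$; its twistor lift is the line $S=\mathbb{P}\{v:Tv=vi\}\subset\mathbb{CP}^3$, and $Sj$ is the lift with the opposite conformal structure. The real set of a real structure is its fixed point set. *)

theory Defs
  imports "HOL-Analysis.Analysis"
begin

text \<open>Model.  \<open>\<H>\<^sup>2\<close> with scalars restricted to \<open>\<complex> = span{1,i}\<close> is \<open>\<complex>\<^sup>4\<close>
  (type \<open>complex^4\<close>): a quaternion \<open>q = z + j w\<close> (z, w complex) is the pair (z, w),
  complex scalars acting on the right (= on the left, since \<complex> is commutative).
  Right multiplication by j is then \<open>(z,w) \<mapsto> (-conj w, conj z)\<close> in each coordinate.\<close>

definition qj :: "complex^4 \<Rightarrow> complex^4" where
  "qj v = vector [- cnj (v$2), cnj (v$1), - cnj (v$4), cnj (v$3)]"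

definition hline :: "complex^4 \<Rightarrow> (complex^4) set" where
  "hline v = {a *s v + b *s qj v | a b. True}"

text \<open>\<open>\<Lambda>\<^sup>2\<complex>\<^sup>4 \<cong> \<complex>\<^sup>6\<close> with ordered basis e12, e13, e14, e23, e24, e34.\<close>

definition wedge :: "complex^4 \<Rightarrow> complex^4 \<Rightarrow> complex^6" where
  "wedge v w = vector
     [v$1*w$2 - v$2*w$1, v$1*w$3 - v$3*w$1, v$1*w$4 - v$4*w$1,
      v$2*w$3 - v$3*w$2, v$2*w$4 - v$4*w$2, v$3*w$4 - v$4*w$3]"

text \<open>The pairing \<open>(\<alpha>,\<beta>) \<mapsto> \<alpha>\<and>\<beta> \<in> \<Lambda>\<^sup>4\<complex>\<^sup>4 \<cong> \<complex>\<close> (coefficient of e1234).\<close>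

definition wedge2 :: "complex^6 \<Rightarrow> complex^6 \<Rightarrow> complex" where
  "wedge2 a b = a$1*b$6 - a$2*b$5 + a$3*b$4 + a$4*b$3 - a$5*b$2 + a$6*b$1"

text \<open>The antilinear extension of \<open>v\<and>w \<mapsto> vj \<and> wj\<close>, written out in coordinates
  (qj e1 = e2, qj e2 = -e1, qj e3 = e4, qj e4 = -e3).\<close>

definition jhat :: "complex^6 \<Rightarrow> complex^6" where
  "jhat a = vector [cnj (a$1), cnj (a$5), - cnj (a$4), - cnj (a$3), cnj (a$2), cnj (a$6)]"

text \<open>Points of a complex projective space \<open>\<P>(V)\<close> are represented by the complex line
  through a nonzero vector (the set of its complex multiples, including 0).\<close>

definition cline :: "complex^'n \<Rightarrow> (complex^'n) set" where
  "cline x = {c *s x | c. True}"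

definition jP :: "(complex^6) set \<Rightarrow> (complex^6) set" where
  "jP P = jhat ` P"

text \<open>Twistor lift of the round sphere given by T: the subspace \<open>{v. Tv = vi}\<close>
  (its projectivisation is the line S in \<open>\<complex>\<P>\<^sup>3\<close>).\<close>

definition twistor_lift :: "complex^4^4 \<Rightarrow> (complex^4) set" where
  "twistor_lift T = {v. T *v v = \<i> *s v}"

text \<open>The point of \<open>Q\<^sup>4\<close> corresponding to a projective line \<open>\<P>(L)\<close>, \<open>L\<close> a 2-dimensional
  subspace of \<open>\<complex>\<^sup>4\<close>: the set of all \<open>u\<and>w\<close> with \<open>u, w \<in> L\<close> (a complex line in \<open>\<Lambda>\<^sup>2\<close>).\<close>

definition line_pt :: "(complex^4) set \<Rightarrow> (complex^6) set" where
  "line_pt L = {wedge u w | u w. u \<in> L \<and> w \<in> L}"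

end

theory Submission
  imports Defs
begin

lemma six0: "(6::6) = 0" by simp
lemma exhaust_6':
  fixes x :: 6
  shows "x = 0 \<or> x = 1 \<or> x = 2 \<or> x = 3 \<or> x = 4 \<or> x = 5"
proof (induct x)
  case (of_int z)
  then have "z = 0 \<or> z = 1 \<or> z = 2 \<or> z = 3 \<or> z = 4 \<or> z = 5" by fastforce
  then show ?case by (elim disjE) simp_all
qed
lemma exhaust_6:
  fixes x :: 6
  shows "x = 1 \<or> x = 2 \<or> x = 3 \<or> x = 4 \<or> x = 5 \<or> x = 6"
  using exhaust_6'[of x] unfolding six0 by blast
lemma vec6_eq: "(x::'a^6) = y \<longleftrightarrow> x$1=y$1 \<and> x$2=y$2 \<and> x$3=y$3 \<and> x$4=y$4 \<and> x$5=y$5 \<and> x$6=y$6"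
proof
  assume H: "x$1=y$1 \<and> x$2=y$2 \<and> x$3=y$3 \<and> x$4=y$4 \<and> x$5=y$5 \<and> x$6=y$6"
  show "x = y" unfolding vec_eq_iff
  proof
    fix i :: 6 show "x$i = y$i" using exhaust_6[of i] H by blast
  qed
qed simp
lemma vec4_eq: "(x::'a^4) = y \<longleftrightarrow> x$1=y$1 \<and> x$2=y$2 \<and> x$3=y$3 \<and> x$4=y$4"
proof
  assume H: "x$1=y$1 \<and> x$2=y$2 \<and> x$3=y$3 \<and> x$4=y$4"
  show "x = y" unfolding vec_eq_iff
  proof
    fix i :: 4 show "x$i = y$i" using exhaust_4[of i] H by blast
  qed
qed simp
lemma vector4_nth[simp]:
 "(vector [a,b,c,d] :: ('a::zero)^4)$1 = a"
 "(vector [a,b,c,d] :: ('a::zero)^4)$2 = b"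
 "(vector [a,b,c,d] :: ('a::zero)^4)$3 = c"
 "(vector [a,b,c,d] :: ('a::zero)^4)$4 = d"
  unfolding vector_def by simp_all

lemma vector6_nth[simp]:
 "(vector [a,b,c,d,e,f] :: ('a::zero)^6)$1 = a"
 "(vector [a,b,c,d,e,f] :: ('a::zero)^6)$2 = b"
 "(vector [a,b,c,d,e,f] :: ('a::zero)^6)$3 = c"
 "(vector [a,b,c,d,e,f] :: ('a::zero)^6)$4 = d"
 "(vector [a,b,c,d,e,f] :: ('a::zero)^6)$5 = e"
 "(vector [a,b,c,d,e,f] :: ('a::zero)^6)$6 = f"
  unfolding vector_def by simp_all

lemma qj_nth[simp]: "qj v $ 1 = - cnj (v$2)" "qj v $ 2 = cnj (v$1)" "qj v $ 3 = - cnj (v$4)" "qj v $ 4 = cnj (v$3)"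
  by (simp_all add: qj_def)
lemma jhat_nth[simp]: "jhat a $1 = cnj (a$1)" "jhat a $2 = cnj (a$5)" "jhat a $3 = - cnj (a$4)"
   "jhat a $4 = - cnj (a$3)" "jhat a $5 = cnj (a$2)" "jhat a $6 = cnj (a$6)"
  by (simp_all add: jhat_def)
lemma wedge_nth: "wedge v w $1 = v$1*w$2 - v$2*w$1" "wedge v w $2 = v$1*w$3 - v$3*w$1"
  "wedge v w $3 = v$1*w$4 - v$4*w$1" "wedge v w $4 = v$2*w$3 - v$3*w$2"
  "wedge v w $5 = v$2*w$4 - v$4*w$2" "wedge v w $6 = v$3*w$4 - v$4*w$3"
  by (simp_all add: wedge_def)

lemma w_add1: "wedge (x+y) z = wedge x z + wedge y z"
  by (simp add: vec6_eq wedge_nth algebra_simps)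
lemma w_add2: "wedge z (x+y) = wedge z x + wedge z y"
  by (simp add: vec6_eq wedge_nth algebra_simps)
lemma w_sm1: "wedge (c *s x) y = c *s wedge x y"
  by (simp add: vec6_eq wedge_nth algebra_simps)
lemma w_sm2: "wedge y (c *s x) = c *s wedge y x"
  by (simp add: vec6_eq wedge_nth algebra_simps)
lemma w_swap: "wedge y x = - wedge x y"
  by (simp add: vec6_eq wedge_nth algebra_simps)
lemma w_self[simp]: "wedge x x = 0"
  by (simp add: vec6_eq wedge_nth algebra_simps)

lemma expand4:
  "wedge (a1 *s e1 + a2 *s e2 + a3 *s e3 + a4 *s e4) (b1 *s e1 + b2 *s e2 + b3 *s e3 + b4 *s e4)
   = (a1*b2 - a2*b1) *s wedge e1 e2 + (a1*b3 - a3*b1) *s wedge e1 e3 + (a1*b4 - a4*b1) *s wedge e1 e4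
   + (a2*b3 - a3*b2) *s wedge e2 e3 + (a2*b4 - a4*b2) *s wedge e2 e4 + (a3*b4 - a4*b3) *s wedge e3 e4"
  apply (simp only: w_add1 w_add2 w_sm1 w_sm2 w_self w_swap[of e1 e2] w_swap[of e1 e3] w_swap[of e1 e4]
      w_swap[of e2 e3] w_swap[of e2 e4] w_swap[of e3 e4])
  apply (simp add: vec6_eq algebra_simps)
  done



lemma qj_add: "qj (x + y) = qj x + qj y" by (simp add: vec4_eq)
lemma qj_sm: "qj (c *s x) = cnj c *s qj x" by (simp add: vec4_eq)
lemma qj_qj: "qj (qj x) = - x" by (simp add: vec4_eq)
lemma qj_0[simp]: "qj 0 = 0" by (simp add: vec4_eq)
lemma qj_eq0: "qj x = 0 \<longleftrightarrow> x = 0"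
  by (metis qj_0 qj_qj neg_equal_0_iff_equal)

lemma jhat_wedge: "jhat (wedge x y) = wedge (qj x) (qj y)"
  by (simp add: vec6_eq wedge_nth algebra_simps)
lemma jhat_jhat: "jhat (jhat a) = a" by (simp add: vec6_eq)
lemma jhat_sm: "jhat (c *s a) = cnj c *s jhat a" by (simp add: vec6_eq)
lemma jhat_add: "jhat (a + b) = jhat a + jhat b" by (simp add: vec6_eq)
lemma jhat_0[simp]: "jhat 0 = 0" by (simp add: vec6_eq)

lemma w2_add1: "wedge2 (a + b) c = wedge2 a c + wedge2 b c" by (simp add: wedge2_def algebra_simps)
lemma w2_add2: "wedge2 c (a + b) = wedge2 c a + wedge2 c b" by (simp add: wedge2_def algebra_simps)
lemma w2_sm1: "wedge2 (k *s a) b = k * wedge2 a b" by (simp add: wedge2_def algebra_simps)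
lemma w2_sm2: "wedge2 a (k *s b) = k * wedge2 a b" by (simp add: wedge2_def algebra_simps)
lemma w2_neg1: "wedge2 (- a) b = - wedge2 a b" by (simp add: wedge2_def algebra_simps)
lemma w2_neg2: "wedge2 a (- b) = - wedge2 a b" by (simp add: wedge2_def algebra_simps)
lemma w2_0[simp]: "wedge2 0 b = 0" "wedge2 a 0 = 0" by (simp_all add: wedge2_def)
lemma w2_comm: "wedge2 a b = wedge2 b a" by (simp add: wedge2_def algebra_simps)
lemma w2_jhat: "wedge2 (jhat a) (jhat b) = cnj (wedge2 a b)" by (simp add: wedge2_def algebra_simps)

lemma pair_share: "wedge2 (wedge x y) (wedge x z) = 0"
  by (simp add: wedge2_def wedge_nth algebra_simps)
lemma pair_13_24: "wedge2 (wedge a c) (wedge b d) = - wedge2 (wedge a b) (wedge c d)"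
  by (simp add: wedge2_def wedge_nth algebra_simps)
lemma pair_14_23: "wedge2 (wedge a d) (wedge b c) = wedge2 (wedge a b) (wedge c d)"
  by (simp add: wedge2_def wedge_nth algebra_simps)

lemma mv_sm: "(A::complex^'n^'m) *v (c *s x) = c *s (A *v x)"
  by (simp add: vec_eq_iff matrix_vector_mult_def sum_distrib_left algebra_simps)
lemma mv_neg: "(- (A::complex^'n^'m)) *v x = - (A *v x)"
  by (simp add: vec_eq_iff matrix_vector_mult_def sum_negf)

lemma cline_scale: "c \<noteq> 0 \<Longrightarrow> cline (c *s a) = cline a"
  unfolding cline_def
  apply (auto simp: vector_smult_assoc)
  apply (rule_tac x="ca / c" in exI)
  apply (simp add: vector_smult_assoc)
  done
lemma cline_self: "a \<in> cline a"
proof -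
  have "a = 1 *s a" by simp
  thus ?thesis unfolding cline_def by blast
qed
lemma jP_cline: "jP (cline a) = cline (jhat a)"
proof
  show "jP (cline a) \<subseteq> cline (jhat a)" unfolding jP_def cline_def by (auto simp: jhat_sm)
  show "cline (jhat a) \<subseteq> jP (cline a)"
  proof
    fix x assume "x \<in> cline (jhat a)"
    then obtain c where c: "x = c *s jhat a" unfolding cline_def by blast
    have "x = jhat (cnj c *s a)" using c by (simp add: jhat_sm)
    moreover have "cnj c *s a \<in> cline a" unfolding cline_def by blast
    ultimately show "x \<in> jP (cline a)" unfolding jP_def by blast
  qed
qed




lemma TT:
  fixes T :: "complex^4^4"
  assumes sq: "T ** T = - mat 1"
  shows "T *v (T *v x) = - x"
proof -
  have "T *v (T *v x) = (T ** T) *v x" by (rule matrix_vector_mul_assoc)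
  also have "\<dots> = (- mat 1) *v x" using sq by simp
  also have "\<dots> = - (mat 1 *v x)" by (rule mv_neg)
  finally show ?thesis by simp
qed

lemma eig_subspace: "vec.subspace {v. (T::complex^'n^'n) *v v = c *s v}"
  unfolding vec.subspace_def
  by (auto simp: matrix_vector_right_distrib mv_sm vector_add_ldistrib vector_smult_assoc mult.commute)

lemma dim_bound:
  fixes T :: "complex^4^4"
  shows "vec.dim {v. T *v v = \<i> *s v} + vec.dim {v. T *v v = - \<i> *s v} \<le> 4"
proof -
  let ?S = "{v. T *v v = \<i> *s v}" and ?S' = "{v. T *v v = - \<i> *s v}"
  have I: "?S \<inter> ?S' = {0}"
  proof -
    { fix v assume "T *v v = \<i> *s v" "T *v v = - \<i> *s v"
      hence "(2*\<i>) *s v = 0" by (simp add: vec_eq_iff)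
      hence "v = 0" by simp }
    thus ?thesis by auto
  qed
  have "vec.dim {x + y |x y. x \<in> ?S \<and> y \<in> ?S'} + vec.dim (?S \<inter> ?S') = vec.dim ?S + vec.dim ?S'"
    by (rule vec.dim_sums_Int[OF eig_subspace eig_subspace])
  moreover have "vec.dim {x + y |x y. x \<in> ?S \<and> y \<in> ?S'} \<le> 4"
    using vec.dim_subset_UNIV[of "{x + y |x y. x \<in> ?S \<and> y \<in> ?S'}"]
    by (simp add: vec.dimension_def card_cart_basis)
  ultimately show ?thesis using I by simp
qed

lemma indep2:
  assumes "b \<noteq> 0" "\<forall>k. a \<noteq> k *s b"
  shows "vec.independent {a,b}" "card {a,b} = 2"
proof -
  have ab: "a \<noteq> b" using assms(2) vector_smult_lid by metis
  have "a \<notin> vec.span {b}" using assms(2) by (auto simp: vec.span_singleton)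
  thus "vec.independent {a,b}" using ab assms(1) by (simp add: vec.independent_insert)
  show "card {a,b} = 2" using ab by simp
qed

lemma indep3:
  assumes "c \<noteq> 0" "\<forall>k. b \<noteq> k *s c" "\<forall>k l. a \<noteq> k *s b + l *s c"
  shows "vec.independent {a,b,c}" "card {a,b,c} = 3"
proof -
  have bc: "b \<noteq> c" using assms(2) vector_smult_lid by metis
  have ab: "a \<noteq> b" using assms(3)[rule_format, of 1 0] by simp
  have ac: "a \<noteq> c" using assms(3)[rule_format, of 0 1] by simp
  have "a \<notin> vec.span {b,c}"
  proof
    assume "a \<in> vec.span {b,c}"
    then obtain k where "a - k *s b \<in> vec.span {c}" by (auto simp: vec.span_insert)
    then obtain l where "a - k *s b = l *s c" by (auto simp: vec.span_singleton)
    hence "a = k *s b + l *s c" by (simp add: algebra_simps)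
    thus False using assms(3) by blast
  qed
  thus "vec.independent {a,b,c}" using ab ac indep2[OF assms(1,2)] by (simp add: vec.independent_insert)
  show "card {a,b,c} = 3" using ab ac bc by simp
qed




lemma qj_eig:
  fixes T :: "complex^4^4"
  assumes ql: "\<forall>v. T *v qj v = qj (T *v v)" and "T *v u = c *s u"
  shows "T *v qj u = cnj c *s qj u"
  using assms by (simp add: qj_sm)

lemma spanL:
  fixes T :: "complex^4^4" and u w x :: "complex^4"
  assumes ql: "\<forall>v. T *v qj v = qj (T *v v)"
    and nz: "wedge u w \<noteq> 0" and u: "T *v u = \<i> *s u" and w: "T *v w = \<i> *s w"
    and x: "T *v x = \<i> *s x"
  shows "\<exists>a b. x = a *s u + b *s w"
proof (rule ccontr)
  assume nx: "\<not> (\<exists>a b. x = a *s u + b *s w)"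
  let ?S = "{v. T *v v = \<i> *s v}" and ?S' = "{v. T *v v = - \<i> *s v}"
  have w0: "w \<noteq> 0" using nz by (auto simp: vec6_eq wedge_nth)
  have uw: "\<forall>k. u \<noteq> k *s w" using nz by (auto simp: w_sm1)
  have "vec.independent {x,u,w}" "card {x,u,w} = 3" using indep3[OF w0 uw] nx by blast+
  moreover have "{x,u,w} \<subseteq> ?S" using u w x by auto
  ultimately have d1: "3 \<le> vec.dim ?S" using vec.independent_card_le_dim by metis
  have qw0: "qj w \<noteq> 0" using w0 qj_eq0 by blast
  have quw: "\<forall>k. qj u \<noteq> k *s qj w"
  proof
    fix k show "qj u \<noteq> k *s qj w"
    proof
      assume "qj u = k *s qj w"
      hence "qj (qj u) = qj (k *s qj w)" by simp
      hence "u = cnj k *s w" by (simp add: qj_sm qj_qj)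
      thus False using uw by blast
    qed
  qed
  have "vec.independent {qj u, qj w}" "card {qj u, qj w} = 2" using indep2[OF qw0 quw] by blast+
  moreover have "{qj u, qj w} \<subseteq> ?S'" using qj_eig[OF ql u] qj_eig[OF ql w] by auto
  ultimately have d2: "2 \<le> vec.dim ?S'" using vec.independent_card_le_dim by metis
  show False using d1 d2 dim_bound[of T] by simp
qed




definition lc6 :: "complex \<Rightarrow> complex \<Rightarrow> complex \<Rightarrow> complex \<Rightarrow> complex \<Rightarrow> complex \<Rightarrow>
   complex^4 \<Rightarrow> complex^4 \<Rightarrow> complex^4 \<Rightarrow> complex^4 \<Rightarrow> complex^6" where
  "lc6 c1 c2 c3 c4 c5 c6 e1 e2 e3 e4 = c1 *s wedge e1 e2 + c2 *s wedge e1 e3 + c3 *s wedge e1 e4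
     + c4 *s wedge e2 e3 + c5 *s wedge e2 e4 + c6 *s wedge e3 e4"

lemma lc6_add: "lc6 c1 c2 c3 c4 c5 c6 e1 e2 e3 e4 + lc6 d1 d2 d3 d4 d5 d6 e1 e2 e3 e4
   = lc6 (c1+d1) (c2+d2) (c3+d3) (c4+d4) (c5+d5) (c6+d6) e1 e2 e3 e4"
  unfolding lc6_def by (simp add: vec6_eq algebra_simps)
lemma lc6_sm: "k *s lc6 c1 c2 c3 c4 c5 c6 e1 e2 e3 e4
   = lc6 (k*c1) (k*c2) (k*c3) (k*c4) (k*c5) (k*c6) e1 e2 e3 e4"
  unfolding lc6_def by (simp add: vec6_eq algebra_simps)

lemma ps1[simp]: "wedge2 (wedge x y) (wedge x z) = 0" by (simp add: wedge2_def wedge_nth algebra_simps)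
lemma ps2[simp]: "wedge2 (wedge x y) (wedge z x) = 0" by (simp add: wedge2_def wedge_nth algebra_simps)
lemma ps3[simp]: "wedge2 (wedge y x) (wedge x z) = 0" by (simp add: wedge2_def wedge_nth algebra_simps)
lemma ps4[simp]: "wedge2 (wedge y x) (wedge z x) = 0" by (simp add: wedge2_def wedge_nth algebra_simps)
lemma pair_23_14: "wedge2 (wedge b c) (wedge a d) = wedge2 (wedge a b) (wedge c d)"
  by (simp add: wedge2_def wedge_nth algebra_simps)
lemma pair_24_13: "wedge2 (wedge b d) (wedge a c) = - wedge2 (wedge a b) (wedge c d)"
  by (simp add: wedge2_def wedge_nth algebra_simps)
lemma pair_34_12: "wedge2 (wedge c d) (wedge a b) = wedge2 (wedge a b) (wedge c d)"
  by (simp add: wedge2_def wedge_nth algebra_simps)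

lemma jw: "jhat (wedge a (qj b)) = wedge b (qj a)"
  by (simp add: vec6_eq wedge_nth algebra_simps)

lemma std_decomp: "\<beta> = lc6 (\<beta>$1) (\<beta>$2) (\<beta>$3) (\<beta>$4) (\<beta>$5) (\<beta>$6)
   (vector [1,0,0,0]) (vector [0,1,0,0]) (vector [0,0,1,0]) (vector [0,0,0,1])"
  unfolding lc6_def by (simp add: vec6_eq wedge_nth)

context
  fixes T :: "complex^4^4" and u w :: "complex^4"
  assumes ql: "\<forall>v. T *v qj v = qj (T *v v)" and sq: "T ** T = - mat 1"
    and nz: "wedge u w \<noteq> 0" and u: "T *v u = \<i> *s u" and w: "T *v w = \<i> *s w"
begin

lemma decomp: "\<exists>a b c d. z = a *s u + b *s w + c *s qj u + d *s qj w"
proof -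
  define P where "P = (1/2) *s (z - \<i> *s (T *v z))"
  define P' where "P' = (1/2) *s (z + \<i> *s (T *v z))"
  have TTz: "T *v (T *v z) = - z" by (rule TT[OF sq])
  have zP: "z = P + P'" unfolding P_def P'_def by (simp add: vec4_eq algebra_simps)
  have TP: "T *v P = \<i> *s P" unfolding P_def
    by (simp add: mv_sm matrix_vector_mult_diff_distrib TTz vec4_eq algebra_simps)
  have TP': "T *v P' = - \<i> *s P'" unfolding P'_def
    by (simp add: mv_sm matrix_vector_right_distrib TTz vec4_eq algebra_simps)
  obtain a b where ab: "P = a *s u + b *s w" using spanL[OF ql nz u w TP] by blast
  have "T *v qj P' = \<i> *s qj P'" using qj_eig[OF ql TP'] by simp
  then obtain c d where cd: "qj P' = c *s u + d *s w" using spanL[OF ql nz u w] by blast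
  have "P' = - qj (qj P')" by (simp add: qj_qj)
  also have "\<dots> = (- cnj c) *s qj u + (- cnj d) *s qj w" unfolding cd by (simp add: qj_add qj_sm)
  finally have P'eq: "P' = (- cnj c) *s qj u + (- cnj d) *s qj w" .
  have "z = a *s u + b *s w + (- cnj c) *s qj u + (- cnj d) *s qj w"
    by (simp only: zP ab P'eq add.assoc)
  thus ?thesis by blast
qed

lemma wedge_in: "\<exists>c1 c2 c3 c4 c5 c6. wedge x y = lc6 c1 c2 c3 c4 c5 c6 u w (qj u) (qj w)"
proof -
  obtain a1 a2 a3 a4 where x: "x = a1 *s u + a2 *s w + a3 *s qj u + a4 *s qj w" using decomp by blast
  obtain b1 b2 b3 b4 where y: "y = b1 *s u + b2 *s w + b3 *s qj u + b4 *s qj w" using decomp by blast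
  show ?thesis unfolding x y expand4 lc6_def by blast
qed

lemma L2span: "\<exists>c1 c2 c3 c4 c5 c6. \<beta> = lc6 c1 c2 c3 c4 c5 c6 u w (qj u) (qj w)"
proof -
  let ?P = "\<lambda>\<beta>. \<exists>c1 c2 c3 c4 c5 c6. \<beta> = lc6 c1 c2 c3 c4 c5 c6 u w (qj u) (qj w)"
  have add: "?P (a + b)" if "?P a" "?P b" for a b using that lc6_add by metis
  have sm: "?P (k *s a)" if "?P a" for k a using that lc6_sm by metis
  have wi: "?P (k *s wedge x y)" for k x y using sm[OF wedge_in[of x y]] .
  let ?E1 = "vector [1,0,0,0] :: complex^4" and ?E2 = "vector [0,1,0,0] :: complex^4"
    and ?E3 = "vector [0,0,1,0] :: complex^4" and ?E4 = "vector [0,0,0,1] :: complex^4"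
  have "\<beta> = \<beta>$1 *s wedge ?E1 ?E2 + \<beta>$2 *s wedge ?E1 ?E3 + \<beta>$3 *s wedge ?E1 ?E4
     + \<beta>$4 *s wedge ?E2 ?E3 + \<beta>$5 *s wedge ?E2 ?E4 + \<beta>$6 *s wedge ?E3 ?E4"
    using std_decomp[of \<beta>] unfolding lc6_def .
  moreover have "?P (\<beta>$1 *s wedge ?E1 ?E2 + \<beta>$2 *s wedge ?E1 ?E3 + \<beta>$3 *s wedge ?E1 ?E4
     + \<beta>$4 *s wedge ?E2 ?E3 + \<beta>$5 *s wedge ?E2 ?E4 + \<beta>$6 *s wedge ?E3 ?E4)"
    by (intro add wi)
  ultimately show ?thesis by simp
qed

definition "DD = wedge2 (wedge u w) (wedge (qj u) (qj w))"

lemma pair_lc6_12: "wedge2 (lc6 c1 c2 c3 c4 c5 c6 u w (qj u) (qj w)) (wedge u w) = c6 * DD"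
  unfolding lc6_def DD_def by (simp add: w2_add1 w2_sm1 pair_34_12)

lemma DD_nz: "DD \<noteq> 0"
proof
  assume D0: "DD = 0"
  have W: "wedge2 \<beta> (wedge u w) = 0" for \<beta>
    using L2span[of \<beta>] pair_lc6_12 D0 by auto
  have "wedge u w = 0"
    using W[of "vector [1,0,0,0,0,0]"] W[of "vector [0,1,0,0,0,0]"] W[of "vector [0,0,1,0,0,0]"]
      W[of "vector [0,0,0,1,0,0]"] W[of "vector [0,0,0,0,1,0]"] W[of "vector [0,0,0,0,0,1]"]
    by (simp add: wedge2_def vec6_eq)
  thus False using nz by simp
qed

end



lemma key:
  fixes p q r s C :: complex
  assumes h1: "cnj p = C*p" and h2: "cnj r = C*q" and h3: "cnj q = C*r" and h4: "cnj s = C * s"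
    and h5: "p * s = q * r" and h6: "\<not>(p=0 \<and> q=0 \<and> r=0 \<and> s=0)"
  shows "\<exists>x y l. l \<noteq> 0 \<and> p = l*(x*cnj x) \<and> q = l*(x*cnj y) \<and> r = l*(y*cnj x) \<and> s = l*(y*cnj y)"
proof (cases "p = 0")
  case False
  hence C0: "C \<noteq> 0" using h1 by auto
  have e1: "q = p * cnj (r/p)"
    using False C0 h1 h2 by (simp add: field_simps)
  have e2: "s = p * ((r/p) * cnj (r/p))"
  proof -
    have "p * ((r/p) * cnj (r/p)) = r * cnj r / cnj p" using False by (simp add: field_simps)
    also have "\<dots> = r * q / p" using h1 h2 C0 False by (simp add: field_simps)
    also have "\<dots> = s" using h5 False by (simp add: field_simps)
    finally show ?thesis by simp
  qed
  show ?thesis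
    by (rule exI[of _ 1], rule exI[of _ "r/p"], rule exI[of _ p]) (use False e1 e2 in simp)
next
  case True
  hence "q*r = 0" using h5 by simp
  have q0: "q = 0"
  proof (rule ccontr)
    assume "q \<noteq> 0"
    hence "r = 0" using \<open>q*r = 0\<close> by simp
    hence "cnj q = 0" using h3 by simp
    thus False using \<open>q \<noteq> 0\<close> by simp
  qed
  hence r0: "r = 0" using h2 by simp
  hence "s \<noteq> 0" using h6 True q0 by simp
  show ?thesis
    by (rule exI[of _ 0], rule exI[of _ 1], rule exI[of _ s]) (use True q0 r0 \<open>s \<noteq> 0\<close> in simp)
qed

lemma wedge_aqa: "wedge (x *s u + y *s w) (qj (x *s u + y *s w))
  = lc6 0 (x*cnj x) (x*cnj y) (y*cnj x) (y*cnj y) 0 u w (qj u) (qj w)"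
  unfolding lc6_def by (simp add: qj_add qj_sm w_add1 w_add2 w_sm1 w_sm2 vec6_eq algebra_simps)

lemma jhat_lc6: "jhat (lc6 0 p q r s 0 u w (qj u) (qj w)) = lc6 0 (cnj p) (cnj r) (cnj q) (cnj s) 0 u w (qj u) (qj w)"
  unfolding lc6_def by (simp add: jhat_add jhat_sm jw vec6_eq algebra_simps)

context
  fixes T :: "complex^4^4" and u w :: "complex^4"
  assumes ql: "\<forall>v. T *v qj v = qj (T *v v)" and sq: "T ** T = - mat 1"
    and nz: "wedge u w \<noteq> 0" and u: "T *v u = \<i> *s u" and w: "T *v w = \<i> *s w"
begin

lemmas DDd = DD_def[OF ql sq nz u w]
lemmas DDn = DD_nz[OF ql sq nz u w]
lemmas L2s = L2span[OF ql sq nz u w]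

lemma pair_lc6_34: "wedge2 (lc6 c1 c2 c3 c4 c5 c6 u w (qj u) (qj w)) (wedge (qj u) (qj w)) = c1 * DD u w"
  unfolding lc6_def by (simp add: w2_add1 w2_sm1 DDd)

lemma pair_self: "wedge2 (lc6 0 p q r s 0 u w (qj u) (qj w)) (lc6 0 p q r s 0 u w (qj u) (qj w))
   = 2*(q*r - p * s) * DD u w"
  unfolding lc6_def
  by (simp add: DDd w2_add1 w2_add2 w2_sm1 w2_sm2 pair_13_24[where a=u and b=w and c="qj u" and d="qj w"]
      pair_14_23[where a=u and b=w and c="qj u" and d="qj w"] pair_23_14[where a=u and b=w and c="qj u" and d="qj w"]
      pair_24_13[where a=u and b=w and c="qj u" and d="qj w"] algebra_simps)

lemma pair_ext: 
  "wedge2 (lc6 0 p q r s 0 u w (qj u) (qj w)) (wedge w (qj w)) = - p * DD u w"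
  "wedge2 (lc6 0 p q r s 0 u w (qj u) (qj w)) (wedge w (qj u)) = q * DD u w"
  "wedge2 (lc6 0 p q r s 0 u w (qj u) (qj w)) (wedge u (qj w)) = r * DD u w"
  "wedge2 (lc6 0 p q r s 0 u w (qj u) (qj w)) (wedge u (qj u)) = - s * DD u w"
  unfolding lc6_def
  by (simp_all add: DDd w2_add1 w2_add2 w2_sm1 w2_sm2 pair_13_24[where a=u and b=w and c="qj u" and d="qj w"]
      pair_14_23[where a=u and b=w and c="qj u" and d="qj w"] pair_23_14[where a=u and b=w and c="qj u" and d="qj w"]
      pair_24_13[where a=u and b=w and c="qj u" and d="qj w"] algebra_simps)

end



lemma expand2: "wedge (a *s x + b *s y) (c *s x + d *s y) = (a*d - b*c) *s wedge x y"
  by (simp add: vec6_eq wedge_nth algebra_simps)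
lemma w_negneg: "wedge (- x) (- y) = wedge x y"
  by (simp add: vec6_eq wedge_nth algebra_simps)
lemma jw2: "wedge (qj v) (qj (qj v)) = wedge v (qj v)"
  by (simp add: vec6_eq wedge_nth qj_qj algebra_simps)
lemma w_neg2: "wedge x (- y) = - wedge x y"
  by (simp add: vec6_eq wedge_nth algebra_simps)
lemma hl: "wedge (s *s v + t *s qj v) (qj (s *s v + t *s qj v)) = (s * cnj s + t * cnj t) *s wedge v (qj v)"
  apply (simp only: qj_add qj_sm qj_qj w_add1 w_add2 w_sm1 w_sm2 w_neg2 w_self w_swap[of "qj v" v])
  apply (simp add: vec6_eq algebra_simps)
  done

lemma cnj_sq_sum: "(a::complex) * cnj a + b * cnj b = 0 \<Longrightarrow> a = 0 \<and> b = 0"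
proof -
  assume h: "a * cnj a + b * cnj b = 0"
  have "complex_of_real ((cmod a)^2 + (cmod b)^2) = a * cnj a + b * cnj b"
    by (simp only: of_real_add complex_norm_square)
  hence "(cmod a)^2 + (cmod b)^2 = 0" using h by (simp only: of_real_eq_0_iff)
  hence "cmod a = 0 \<and> cmod b = 0" by (simp add: sum_power2_eq_zero_iff)
  thus ?thesis by simp
qed

lemma wedge_aqa_nz: "a \<noteq> 0 \<Longrightarrow> wedge a (qj a) \<noteq> 0"
proof
  assume a: "a \<noteq> 0" and w0: "wedge a (qj a) = 0"
  have "wedge a (qj a) $ 1 = a$1 * cnj (a$1) + a$2 * cnj (a$2)" by (simp add: wedge_nth)
  hence "a$1 * cnj (a$1) + a$2 * cnj (a$2) = 0" using w0 by simp
  hence 12: "a$1 = 0 \<and> a$2 = 0" by (rule cnj_sq_sum)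
  have "wedge a (qj a) $ 6 = a$3 * cnj (a$3) + a$4 * cnj (a$4)" by (simp add: wedge_nth)
  hence "a$3 * cnj (a$3) + a$4 * cnj (a$4) = 0" using w0 by simp
  hence 34: "a$3 = 0 \<and> a$4 = 0" by (rule cnj_sq_sum)
  have "a = 0" using 12 34 by (simp add: vec4_eq)
  thus False using a by simp
qed



context
  fixes T :: "complex^4^4" and u w :: "complex^4"
  assumes ql: "\<forall>v. T *v qj v = qj (T *v v)" and sq: "T ** T = - mat 1"
    and nz: "wedge u w \<noteq> 0" and u: "T *v u = \<i> *s u" and w: "T *v w = \<i> *s w"
begin

lemma real_pts:
  assumes a0: "\<alpha> \<noteq> 0" and aa: "wedge2 \<alpha> \<alpha> = 0" and a12: "wedge2 \<alpha> (wedge u w) = 0"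
    and a34: "wedge2 \<alpha> (wedge (qj u) (qj w)) = 0" and jC: "jhat \<alpha> = C *s \<alpha>"
  shows "\<exists>a l. a \<noteq> 0 \<and> T *v a = \<i> *s a \<and> l \<noteq> 0 \<and> \<alpha> = l *s wedge a (qj a)"
proof -
  note DDn = DD_nz[OF ql sq nz u w]
  obtain c1 c2 c3 c4 c5 c6 where A: "\<alpha> = lc6 c1 c2 c3 c4 c5 c6 u w (qj u) (qj w)"
    using L2span[OF ql sq nz u w] by blast
  have "c6 = 0" using a12 pair_lc6_12[OF ql sq nz u w, of c1 c2 c3 c4 c5 c6] A DDn by simp
  moreover have "c1 = 0" using a34 pair_lc6_34[OF ql sq nz u w, of c1 c2 c3 c4 c5 c6] A DDn by simp
  ultimately have A': "\<alpha> = lc6 0 c2 c3 c4 c5 0 u w (qj u) (qj w)" using A by simp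
  have "2*(c3*c4 - c2*c5) * DD u w = 0" using aa pair_self[OF ql sq nz u w, of c2 c3 c4 c5] A' by simp
  hence h5: "c2*c5 = c3*c4" using DDn by simp
  have E: "lc6 0 (cnj c2) (cnj c4) (cnj c3) (cnj c5) 0 u w (qj u) (qj w)
      = lc6 0 (C*c2) (C*c3) (C*c4) (C*c5) 0 u w (qj u) (qj w)"
    using jC A' jhat_lc6[of c2 c3 c4 c5 u w] lc6_sm[of C 0 c2 c3 c4 c5 0 u w "qj u" "qj w"] by simp
  note PE = pair_ext[OF ql sq nz u w]
  have h1: "cnj c2 = C*c2" using arg_cong[OF E, of "\<lambda>z. wedge2 z (wedge w (qj w))"] PE(1) DDn by simp
  have h2: "cnj c4 = C*c3" using arg_cong[OF E, of "\<lambda>z. wedge2 z (wedge w (qj u))"] PE(2) DDn by simp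
  have h3: "cnj c3 = C*c4" using arg_cong[OF E, of "\<lambda>z. wedge2 z (wedge u (qj w))"] PE(3) DDn by simp
  have h4: "cnj c5 = C*c5" using arg_cong[OF E, of "\<lambda>z. wedge2 z (wedge u (qj u))"] PE(4) DDn by simp
  have h6: "\<not>(c2=0 \<and> c3=0 \<and> c4=0 \<and> c5=0)" using a0 A' by (auto simp: lc6_def)
  obtain x y l where K: "l \<noteq> 0" "c2 = l*(x*cnj x)" "c3 = l*(x*cnj y)" "c4 = l*(y*cnj x)" "c5 = l*(y*cnj y)"
    using key[OF h1 h2 h3 h4 h5 h6] by blast
  define a where "a = x *s u + y *s w"
  have "\<alpha> = l *s lc6 0 (x*cnj x) (x*cnj y) (y*cnj x) (y*cnj y) 0 u w (qj u) (qj w)"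
    unfolding A' lc6_sm K by simp
  also have "\<dots> = l *s wedge a (qj a)" unfolding a_def wedge_aqa ..
  finally have al: "\<alpha> = l *s wedge a (qj a)" .
  have "a \<noteq> 0" using al a0 by auto
  moreover have "T *v a = \<i> *s a" unfolding a_def
    by (simp add: matrix_vector_right_distrib mv_sm u w vec4_eq algebra_simps)
  ultimately show ?thesis using al K(1) by blast
qed

end



lemma hline_mem: "x \<in> hline v \<longleftrightarrow> (\<exists>a b. x = a *s v + b *s qj v)"
  unfolding hline_def by blast

lemma L_to_hline:
  fixes T :: "complex^4^4"
  assumes ql: "\<forall>v. T *v qj v = qj (T *v v)" and a: "T *v a = \<i> *s a"
  shows "(\<lambda>x. T *v x) ` hline a = hline a"
proof
  have Tqa: "T *v qj a = - \<i> *s qj a" using qj_eig[OF ql a] by simp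
  show "(\<lambda>x. T *v x) ` hline a \<subseteq> hline a"
  proof
    fix z assume "z \<in> (\<lambda>x. T *v x) ` hline a"
    then obtain y where y: "y \<in> hline a" "z = T *v y" by blast
    then obtain s t where z: "z = T *v (s *s a + t *s qj a)" unfolding hline_mem by blast
    have "z = (s * \<i>) *s a + (- t * \<i>) *s qj a"
      unfolding z by (simp add: matrix_vector_right_distrib mv_sm a Tqa vec4_eq algebra_simps)
    thus "z \<in> hline a" unfolding hline_mem by blast
  qed
  show "hline a \<subseteq> (\<lambda>x. T *v x) ` hline a"
  proof
    fix z assume "z \<in> hline a"
    then obtain s t where z: "z = s *s a + t *s qj a" unfolding hline_mem by blast
    have "z = T *v ((- \<i> * s) *s a + (\<i> * t) *s qj a)"
      unfolding z by (simp add: matrix_vector_right_distrib mv_sm a Tqa vec4_eq algebra_simps)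
    moreover have "(- \<i> * s) *s a + (\<i> * t) *s qj a \<in> hline a" unfolding hline_mem by blast
    ultimately show "z \<in> (\<lambda>x. T *v x) ` hline a" by blast
  qed
qed

lemma hline_to_L:
  fixes T :: "complex^4^4"
  assumes ql: "\<forall>v. T *v qj v = qj (T *v v)" and sq: "T ** T = - mat 1"
    and v0: "v \<noteq> 0" and inv: "(\<lambda>x. T *v x) ` hline v = hline v"
  shows "\<exists>a. a \<noteq> 0 \<and> T *v a = \<i> *s a \<and> cline (wedge v (qj v)) = cline (wedge a (qj a))"
proof -
  have "v \<in> hline v" unfolding hline_mem by (rule exI[of _ 1], rule exI[of _ 0]) simp
  hence "T *v v \<in> hline v" using inv by blast
  then obtain \<alpha> \<beta> where Tv: "T *v v = \<alpha> *s v + \<beta> *s qj v" unfolding hline_mem by blast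
  define P where "P = (1/2) *s (v - \<i> *s (T *v v))"
  have TTv: "T *v (T *v v) = - v" by (rule TT[OF sq])
  have TP: "T *v P = \<i> *s P" unfolding P_def
    by (simp add: mv_sm matrix_vector_mult_diff_distrib TTv vec4_eq algebra_simps)
  show ?thesis
  proof (cases "P = 0")
    case False
    define s where "s = (1 - \<i> * \<alpha>) / 2"
    define t where "t = - \<i> * \<beta> / 2"
    have Pst: "P = s *s v + t *s qj v" unfolding P_def s_def t_def Tv
      by (simp add: vec4_eq field_simps)
    have c0: "s * cnj s + t * cnj t \<noteq> 0"
    proof
      assume "s * cnj s + t * cnj t = 0"
      hence "s = 0 \<and> t = 0" by (rule cnj_sq_sum)
      thus False using False Pst by simp
    qed
    have "wedge P (qj P) = (s * cnj s + t * cnj t) *s wedge v (qj v)" unfolding Pst by (rule hl)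
    hence "cline (wedge P (qj P)) = cline (wedge v (qj v))" using cline_scale[OF c0] by simp
    thus ?thesis using False TP by metis
  next
    case True
    hence "v = \<i> *s (T *v v)" unfolding P_def by (simp add: vec4_eq algebra_simps)
    hence h2: "(- \<i>) *s v = (- \<i>) *s (\<i> *s (T *v v))" by (rule arg_cong)
    have "T *v v = (- \<i>) *s v" unfolding h2 by (simp add: vector_smult_assoc)
    hence Tq: "T *v qj v = \<i> *s qj v" using qj_eig[OF ql, of v "- \<i>"] by simp
    have "qj v \<noteq> 0" using v0 qj_eq0 by blast
    thus ?thesis using Tq jw2[of v] by metis
  qed
qed




theorem mainTheorem18:
  fixes T :: "complex^4^4" and \<sigma> \<sigma>' :: "complex^6"
  assumes quat_lin: "\<forall>v. T *v qj v = qj (T *v v)"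
    and sq: "T ** T = - mat 1"
    and rep_S: "\<sigma> \<noteq> 0" "\<sigma> \<in> line_pt (twistor_lift T)"
    and rep_Sj: "\<sigma>' \<noteq> 0" "\<sigma>' \<in> line_pt (qj ` twistor_lift T)"
  defines "Q2S \<equiv> {cline \<alpha> | \<alpha>. \<alpha> \<noteq> 0 \<and> wedge2 \<alpha> \<alpha> = 0 \<and> wedge2 \<alpha> \<sigma> = 0 \<and> wedge2 \<alpha> \<sigma>' = 0}"
  shows "(\<forall>P \<in> Q2S. jP P \<in> Q2S \<and> jP (jP P) = P)
    \<and> {P \<in> Q2S. jP P = P} = {cline (wedge v (qj v)) | v. v \<noteq> 0 \<and> (\<lambda>x. T *v x) ` hline v = hline v}
    \<and> {P \<in> Q2S. jP P = P} = {cline (wedge a (qj a)) | a. a \<noteq> 0 \<and> a \<in> twistor_lift T}"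
proof -
  obtain u w where \<sigma>: "\<sigma> = wedge u w" and uL: "T *v u = \<i> *s u" and wL: "T *v w = \<i> *s w"
    using rep_S(2) unfolding line_pt_def twistor_lift_def by blast
  have nz: "wedge u w \<noteq> 0" using rep_S(1) \<sigma> by simp
  obtain u1 w1 where \<sigma>': "\<sigma>' = wedge (qj u1) (qj w1)" and u1: "T *v u1 = \<i> *s u1"
      and w1: "T *v w1 = \<i> *s w1"
    using rep_Sj(2) unfolding line_pt_def twistor_lift_def by blast
  obtain a b where ab: "u1 = a *s u + b *s w" using spanL[OF quat_lin nz uL wL u1] by blast
  obtain c d where cd: "w1 = c *s u + d *s w" using spanL[OF quat_lin nz uL wL w1] by blast
  define Pq where "Pq = wedge (qj u) (qj w)"
  define k where "k = cnj (a*d - b*c)"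
  have "\<sigma>' = jhat (wedge u1 w1)" unfolding \<sigma>' by (simp add: jhat_wedge)
  also have "\<dots> = k *s Pq" unfolding ab cd expand2 k_def Pq_def by (simp only: jhat_sm jhat_wedge)
  finally have \<sigma>'k: "\<sigma>' = k *s Pq" .
  have k0: "k \<noteq> 0" using rep_Sj(1) \<sigma>'k by auto
  have jPi: "jhat Pq = wedge u w" unfolding Pq_def by (simp add: jhat_wedge qj_qj w_negneg)
  have jS: "jhat (wedge u w) = Pq" unfolding Pq_def by (simp add: jhat_wedge)
  have mem: "P \<in> Q2S \<longleftrightarrow> (\<exists>\<alpha>. P = cline \<alpha> \<and> \<alpha> \<noteq> 0 \<and> wedge2 \<alpha> \<alpha> = 0 \<and> wedge2 \<alpha> (wedge u w) = 0
      \<and> wedge2 \<alpha> Pq = 0)" for P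
    unfolding Q2S_def \<sigma> \<sigma>'k using k0 by (auto simp: w2_sm2)
  note ctx = quat_lin sq nz uL wL
  have part1: "\<forall>P \<in> Q2S. jP P \<in> Q2S \<and> jP (jP P) = P"
  proof
    fix P assume "P \<in> Q2S"
    then obtain \<alpha> where P: "P = cline \<alpha>" and h: "\<alpha> \<noteq> 0" "wedge2 \<alpha> \<alpha> = 0" "wedge2 \<alpha> (wedge u w) = 0"
      "wedge2 \<alpha> Pq = 0" unfolding mem by blast
    have jP1: "jP P = cline (jhat \<alpha>)" unfolding P by (rule jP_cline)
    have "jhat \<alpha> \<noteq> 0" using h(1) jhat_jhat[of \<alpha>] by force
    moreover have "wedge2 (jhat \<alpha>) (jhat \<alpha>) = 0" using h(2) by (simp add: w2_jhat)
    moreover have "wedge2 (jhat \<alpha>) (wedge u w) = 0" using h(4) jPi w2_jhat[of \<alpha> Pq] by simp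
    moreover have "wedge2 (jhat \<alpha>) Pq = 0" using h(3) jS w2_jhat[of \<alpha> "wedge u w"] by simp
    ultimately have "jP P \<in> Q2S" unfolding mem jP1 by blast
    moreover have "jP (jP P) = P" unfolding jP1 jP_cline jhat_jhat P ..
    ultimately show "jP P \<in> Q2S \<and> jP (jP P) = P" by blast
  qed
  have part3: "{P \<in> Q2S. jP P = P} = {cline (wedge a (qj a)) | a. a \<noteq> 0 \<and> a \<in> twistor_lift T}"
  proof
    show "{P \<in> Q2S. jP P = P} \<subseteq> {cline (wedge a (qj a)) | a. a \<noteq> 0 \<and> a \<in> twistor_lift T}"
    proof
      fix P assume "P \<in> {P \<in> Q2S. jP P = P}"
      then obtain \<alpha> where P: "P = cline \<alpha>" and h: "\<alpha> \<noteq> 0" "wedge2 \<alpha> \<alpha> = 0" "wedge2 \<alpha> (wedge u w) = 0"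
        "wedge2 \<alpha> Pq = 0" and fx: "jP P = P" unfolding mem by blast
      have "cline (jhat \<alpha>) = cline \<alpha>" using fx P jP_cline by simp
      hence "jhat \<alpha> \<in> cline \<alpha>" using cline_self[of "jhat \<alpha>"] by simp
      then obtain C where C: "jhat \<alpha> = C *s \<alpha>" unfolding cline_def by blast
      obtain a l where al: "a \<noteq> 0" "T *v a = \<i> *s a" "l \<noteq> 0" "\<alpha> = l *s wedge a (qj a)"
        using real_pts[OF ctx h(1,2,3) h(4)[unfolded Pq_def] C] by blast
      have "P = cline (wedge a (qj a))" unfolding P al(4) using cline_scale[OF al(3)] .
      thus "P \<in> {cline (wedge a (qj a)) | a. a \<noteq> 0 \<and> a \<in> twistor_lift T}"
        using al(1,2) unfolding twistor_lift_def by blast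
    qed
    show "{cline (wedge a (qj a)) | a. a \<noteq> 0 \<and> a \<in> twistor_lift T} \<subseteq> {P \<in> Q2S. jP P = P}"
    proof
      fix P assume "P \<in> {cline (wedge a (qj a)) | a. a \<noteq> 0 \<and> a \<in> twistor_lift T}"
      then obtain a' where P: "P = cline (wedge a' (qj a'))" and a0: "a' \<noteq> 0" and aL: "T *v a' = \<i> *s a'"
        unfolding twistor_lift_def by blast
      obtain x y where xy: "a' = x *s u + y *s w" using spanL[OF quat_lin nz uL wL aL] by blast
      have A: "wedge a' (qj a') = lc6 0 (x*cnj x) (x*cnj y) (y*cnj x) (y*cnj y) 0 u w (qj u) (qj w)"
        unfolding xy by (rule wedge_aqa)
      have "wedge a' (qj a') \<noteq> 0" using a0 by (rule wedge_aqa_nz)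
      moreover have "wedge2 (wedge a' (qj a')) (wedge a' (qj a')) = 0"
        unfolding A pair_self[OF ctx] by (simp add: algebra_simps)
      moreover have "wedge2 (wedge a' (qj a')) (wedge u w) = 0"
        unfolding A pair_lc6_12[OF ctx] by simp
      moreover have "wedge2 (wedge a' (qj a')) Pq = 0"
        unfolding A Pq_def pair_lc6_34[OF ctx] by simp
      ultimately have "P \<in> Q2S" unfolding mem P by blast
      moreover have "jP P = P" unfolding P jP_cline jw ..
      ultimately show "P \<in> {P \<in> Q2S. jP P = P}" by blast
    qed
  qed
  have sets: "{cline (wedge v (qj v)) | v. v \<noteq> 0 \<and> (\<lambda>x. T *v x) ` hline v = hline v}
      = {cline (wedge a (qj a)) | a. a \<noteq> 0 \<and> a \<in> twistor_lift T}"
  proof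
    show "{cline (wedge v (qj v)) | v. v \<noteq> 0 \<and> (\<lambda>x. T *v x) ` hline v = hline v}
      \<subseteq> {cline (wedge a (qj a)) | a. a \<noteq> 0 \<and> a \<in> twistor_lift T}"
    proof
      fix P assume "P \<in> {cline (wedge v (qj v)) | v. v \<noteq> 0 \<and> (\<lambda>x. T *v x) ` hline v = hline v}"
      then obtain v where P: "P = cline (wedge v (qj v))" and v0: "v \<noteq> 0"
        and inv: "(\<lambda>x. T *v x) ` hline v = hline v" by blast
      obtain a' where "a' \<noteq> 0" "T *v a' = \<i> *s a'" "cline (wedge v (qj v)) = cline (wedge a' (qj a'))"
        using hline_to_L[OF quat_lin sq v0 inv] by blast
      thus "P \<in> {cline (wedge a (qj a)) | a. a \<noteq> 0 \<and> a \<in> twistor_lift T}"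
        unfolding P twistor_lift_def by blast
    qed
    show "{cline (wedge a (qj a)) | a. a \<noteq> 0 \<and> a \<in> twistor_lift T}
      \<subseteq> {cline (wedge v (qj v)) | v. v \<noteq> 0 \<and> (\<lambda>x. T *v x) ` hline v = hline v}"
    proof
      fix P assume "P \<in> {cline (wedge a (qj a)) | a. a \<noteq> 0 \<and> a \<in> twistor_lift T}"
      then obtain a' where P: "P = cline (wedge a' (qj a'))" and a0: "a' \<noteq> 0" and aL: "T *v a' = \<i> *s a'"
        unfolding twistor_lift_def by blast
      have "(\<lambda>x. T *v x) ` hline a' = hline a'" by (rule L_to_hline[OF quat_lin aL])
      thus "P \<in> {cline (wedge v (qj v)) | v. v \<noteq> 0 \<and> (\<lambda>x. T *v x) ` hline v = hline v}"
        using P a0 by blast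
    qed
  qed
  show ?thesis using part1 part3 sets by simp
qed


end
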